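(* Let $f:\{0,1\}^n\to\mathbb{R}$, $c$ in the image of $f$, and $I\subset[1..n]$. Let $Z=\{z\in\{0,1\}^n\mid z_i=0 \text{ for all } i\notin I\}$. Assume that for all $y\in\{0,1\}^n$ with $f(y)\le c$ we have $f(y\oplus z)=f(y)$ for all $z\in Z$. Then for any $(\mu+\lambda)$-elitist unary unbiased black-box algorithm optimizing $f$, any $t\ge 0$ and any $k\in[1..\mu]$, conditioned on the event $E_{t,c}=\{\max_{j\in[1..\mu]} f(x^{(t,j)})=c\}$, the bits $x^{(t,k)}_i$, $i\in I$, are mutually independent, independent of all other bits of $x^{(t,k)}$, and uniformly distributed in $\{0,1\}$.
   Context: A unary unbiased variation operator $V$ assigns to each $x\in\{0,1\}^n$ a probability distribution $V(x)$ on $\{0,1\}^n$ such that for all $x,y,z$, $\Pr[y=V(x)]=\Pr[y\oplus z=V(x\oplus z)]$, and for all permutations $\sigma$ of $[1..n]$, $\Pr[y=V(x)]=\Pr[\sigma(y)=V(\sigma(x))]$, where $\sigma(x)=(x_{\sigma(1)},\dots,x_{\sigma(n)})$. A $(\mu+\lambda)$-elitist unary unbiased black-box algorithm: generate $\mu$ search points $x^{(0,1)},\dots,x^{(0,\mu)}$ independently and uniformly at random and let $X$ be this population. In each iteration $t=1,2,\dots$, choose $\lambda$ individuals $p_1,\dots,p_\lambda$ from $X$ and $\lambda$ unary unbiased variation operators $V_1,\dots,V_\lambda$, sample $q_j\sim V_j(p_j)$, and let the new $X$ be a selection of $\mu$ best individuals of $X\cup\{q_1,\dots,q_\lambda\}$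 (ties broken arbitrarily). All choices (parents, operators, selection among ties) may depend only on the fitness values of the search points generated so far. The population after iteration $t$ is denoted $x^{(t,1)},\dots,x^{(t,\mu)}$. *)

theory Defs
  imports "HOL-Probability.Probability" "HOL-Combinatorics.Permutations"
begin

(* Search points of {0,1}^n are boolean lists of length n; bit positions are 0..n-1
   (the paper's positions 1..n shifted by one). *)
type_synonym bits = "bool list"
type_synonym varop = "bits \<Rightarrow> bits pmf"

definition cube :: "nat \<Rightarrow> bits set" where
  "cube n = {x. length x = n}"

definition uniform_cube :: "nat \<Rightarrow> bits pmf" where
  "uniform_cube n = pmf_of_set (cube n)"

definition xorv :: "bits \<Rightarrow> bits \<Rightarrow> bits" where
  "xorv x z = map2 (\<lambda>a b. a \<noteq> b) x z"

definition permv :: "nat \<Rightarrow> (nat \<Rightarrow> nat) \<Rightarrow> bits \<Rightarrow> bits" where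
  "permv n \<sigma> x = map (\<lambda>i. x ! \<sigma> i) [0..<n]"

definition unary_unbiased :: "nat \<Rightarrow> varop \<Rightarrow> bool" where
  "unary_unbiased n V \<longleftrightarrow>
     (\<forall>x\<in>cube n. set_pmf (V x) \<subseteq> cube n) \<and>
     (\<forall>x\<in>cube n. \<forall>y\<in>cube n. \<forall>z\<in>cube n.
        pmf (V x) y = pmf (V (xorv x z)) (xorv y z)) \<and>
     (\<forall>\<sigma>. \<sigma> permutes {..<n} \<longrightarrow> (\<forall>x\<in>cube n. \<forall>y\<in>cube n.
        pmf (V x) y = pmf (V (permv n \<sigma> x)) (permv n \<sigma> y)))"

fun indep_list :: "'a pmf list \<Rightarrow> 'a list pmf" where
  "indep_list [] = return_pmf []"
| "indep_list (p # ps) = bind_pmf p (\<lambda>x. map_pmf (\<lambda>xs. x # xs) (indep_list ps))"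

definition best_selection :: "nat \<Rightarrow> real list \<Rightarrow> nat list \<Rightarrow> bool" where
  "best_selection \<mu> fl sel \<longleftrightarrow> length sel = \<mu> \<and> distinct sel \<and> set sel \<subseteq> {..<length fl} \<and>
     (\<forall>i\<in>set sel. \<forall>j<length fl. j \<notin> set sel \<longrightarrow> fl ! j \<le> fl ! i)"

(* An algorithm is given by an internal state type 's (its memory), which is only ever
   fed with fitness values and its own (possibly random) choices:
   - init: from the fitness values of the initial population, an initial state;
   - vary: from the state, the parents (indices into the population) and operators;
   - select: from state, the variation choice and the fitness values of population @ offspring,
     the selected indices (into population @ offspring) and the new state. *)
definition elitist_unbiased_alg ::
  "nat \<Rightarrow> nat \<Rightarrow> nat \<Rightarrow> ('s \<Rightarrow> (nat list \<times> varop list) pmf)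
     \<Rightarrow> ('s \<Rightarrow> nat list \<times> varop list \<Rightarrow> real list \<Rightarrow> (nat list \<times> 's) pmf) \<Rightarrow> bool" where
  "elitist_unbiased_alg n \<mu> lam vary select \<longleftrightarrow>
     (\<forall>s. \<forall>ch\<in>set_pmf (vary s).
        length (fst ch) = lam \<and> set (fst ch) \<subseteq> {..<\<mu>} \<and> length (snd ch) = lam \<and>
        (\<forall>V\<in>set (snd ch). unary_unbiased n V)) \<and>
     (\<forall>s ch fl. length fl = \<mu> + lam \<longrightarrow>
        (\<forall>r\<in>set_pmf (select s ch fl). best_selection \<mu> fl (fst r)))"

definition ea_init :: "nat \<Rightarrow> nat \<Rightarrow> (bits \<Rightarrow> real) \<Rightarrow> (real list \<Rightarrow> 's pmf) \<Rightarrow> (bits list \<times> 's) pmf" where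
  "ea_init n \<mu> f init =
     bind_pmf (indep_list (replicate \<mu> (uniform_cube n)))
       (\<lambda>P. map_pmf (\<lambda>s. (P, s)) (init (map f P)))"

definition ea_step :: "nat \<Rightarrow> (bits \<Rightarrow> real) \<Rightarrow> ('s \<Rightarrow> (nat list \<times> varop list) pmf)
     \<Rightarrow> ('s \<Rightarrow> nat list \<times> varop list \<Rightarrow> real list \<Rightarrow> (nat list \<times> 's) pmf)
     \<Rightarrow> bits list \<times> 's \<Rightarrow> (bits list \<times> 's) pmf" where
  "ea_step lam f vary select st =
     (case st of (P, s) \<Rightarrow>
       bind_pmf (vary s) (\<lambda>(par, ops).
         bind_pmf (indep_list (map (\<lambda>j. (ops ! j) (P ! (par ! j))) [0..<lam])) (\<lambda>Q.
           map_pmf (\<lambda>(sel, s'). (map (\<lambda>i. (P @ Q) ! i) sel, s'))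
             (select s (par, ops) (map f (P @ Q))))))"

fun ea_run :: "nat \<Rightarrow> nat \<Rightarrow> nat \<Rightarrow> (bits \<Rightarrow> real) \<Rightarrow> (real list \<Rightarrow> 's pmf)
     \<Rightarrow> ('s \<Rightarrow> (nat list \<times> varop list) pmf)
     \<Rightarrow> ('s \<Rightarrow> nat list \<times> varop list \<Rightarrow> real list \<Rightarrow> (nat list \<times> 's) pmf)
     \<Rightarrow> nat \<Rightarrow> (bits list \<times> 's) pmf" where
  "ea_run n \<mu> lam f init vary select 0 = ea_init n \<mu> f init"
| "ea_run n \<mu> lam f init vary select (Suc t) =
     bind_pmf (ea_run n \<mu> lam f init vary select t) (ea_step lam f vary select)"

definition Zset :: "nat \<Rightarrow> nat set \<Rightarrow> bits set" where
  "Zset n I = {z \<in> cube n. \<forall>i<n. i \<notin> I \<longrightarrow> \<not> z ! i}"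

definition best_is :: "(bits \<Rightarrow> real) \<Rightarrow> real \<Rightarrow> (bits list \<times> 's) set" where
  "best_is f c = {st. Max (f ` set (fst st)) = c}"

(* random variables: bit i (i in I) as Some i, the vector of all remaining bits as None *)
definition bit_family :: "nat \<Rightarrow> nat set \<Rightarrow> nat option \<Rightarrow> bits \<Rightarrow> bool + bool list" where
  "bit_family n I j x = (case j of Some i \<Rightarrow> Inl (x ! i)
                                | None \<Rightarrow> Inr (map (\<lambda>l. x ! l) (filter (\<lambda>l. l \<notin> I) [0..<n])))"

end

theory Submission
  imports Defs
begin

definition flip :: "nat \<Rightarrow> bits \<Rightarrow> bits" where
  "flip a x = x[a := (\<not> x ! a)]"

lemma flip_flip[simp]: "flip a (flip a x) = x"
  unfolding flip_def by (cases "a < length x") (auto simp: list_update_beyond)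

lemma length_flip[simp]: "length (flip a x) = length x"
  unfolding flip_def by simp

lemma flip_cube[simp]: "flip a x \<in> cube n \<longleftrightarrow> x \<in> cube n"
  unfolding cube_def by simp

lemma inj_flip: "inj (flip a)"
  by (metis flip_flip injI)

lemma nth_flip: "i \<noteq> a \<Longrightarrow> flip a x ! i = x ! i"
  unfolding flip_def by simp

lemma nth_flip_same: "a < length x \<Longrightarrow> flip a x ! a = (\<not> x ! a)"
  unfolding flip_def by simp

lemma flip_measure:
  fixes D :: "bits pmf"
  assumes "map_pmf (flip a) D = D"
  shows "measure_pmf.prob D X = measure_pmf.prob D (flip a -` X)"
  using measure_map_pmf[of "flip a" D X] assms by simp

lemma prob_eq_on_support:
  fixes D :: "'a pmf"
  assumes "X \<inter> set_pmf D = Y \<inter> set_pmf D"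
  shows "measure_pmf.prob D X = measure_pmf.prob D Y"
  by (metis assms measure_Int_set_pmf)

lemma bool_set_cases: "C = {} \<or> C = {True} \<or> C = {False} \<or> C = (UNIV :: bool set)"
proof (cases "True \<in> C"; cases "False \<in> C")
  assume "True \<in> C" "False \<in> C" then show ?thesis using UNIV_bool by auto
next
  assume "True \<in> C" "False \<notin> C" then have "C = {True}" by (auto; case_tac x; simp)
  then show ?thesis by blast
next
  assume "True \<notin> C" "False \<in> C" then have "C = {False}" by (auto; case_tac x; simp)
  then show ?thesis by blast
next
  assume "True \<notin> C" "False \<notin> C" then have "C = {}" by (auto; case_tac x; simp)
  then show ?thesis by blast
qed

lemma half_split:
  fixes D :: "bits pmf"
  assumes supp: "set_pmf D \<subseteq> cube n" and a: "a < n"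
    and inv: "map_pmf (flip a) D = D"
    and F: "\<forall>x\<in>cube n. flip a x \<in> F \<longleftrightarrow> x \<in> F"
  shows "measure_pmf.prob D (F \<inter> {x. x ! a \<in> C}) = real (card C) / 2 * measure_pmf.prob D F"
proof -
  have sw: "measure_pmf.prob D (F \<inter> {x. x ! a = b}) = measure_pmf.prob D (F \<inter> {x. x ! a = (\<not> b)})" for b
  proof -
    have "measure_pmf.prob D (F \<inter> {x. x ! a = b}) = measure_pmf.prob D (flip a -` (F \<inter> {x. x ! a = b}))"
      by (rule flip_measure[OF inv])
    also have "\<dots> = measure_pmf.prob D (F \<inter> {x. x ! a = (\<not> b)})"
    proof (rule prob_eq_on_support)
      show "flip a -` (F \<inter> {x. x ! a = b}) \<inter> set_pmf D = F \<inter> {x. x ! a = (\<not> b)} \<inter> set_pmf D"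
      proof (intro set_eqI iffI)
        fix x assume x: "x \<in> flip a -` (F \<inter> {x. x ! a = b}) \<inter> set_pmf D"
        then have c: "x \<in> cube n" using supp by auto
        then have "length x = n" by (simp add: cube_def)
        then show "x \<in> F \<inter> {x. x ! a = (\<not> b)} \<inter> set_pmf D" using x F c a by (auto simp: nth_flip_same)
      next
        fix x assume x: "x \<in> F \<inter> {x. x ! a = (\<not> b)} \<inter> set_pmf D"
        then have c: "x \<in> cube n" using supp by auto
        then have "length x = n" by (simp add: cube_def)
        then show "x \<in> flip a -` (F \<inter> {x. x ! a = b}) \<inter> set_pmf D" using x F c a by (auto simp: nth_flip_same)
      qed
    qed
    finally show ?thesis .
  qed
  have tot: "measure_pmf.prob D (F \<inter> {x. x ! a = True}) + measure_pmf.prob D (F \<inter> {x. x ! a = False}) = measure_pmf.prob D F"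
  proof -
    have "measure_pmf.prob D ((F \<inter> {x. x ! a = True}) \<union> (F \<inter> {x. x ! a = False})) =
      measure_pmf.prob D (F \<inter> {x. x ! a = True}) + measure_pmf.prob D (F \<inter> {x. x ! a = False})"
      by (rule measure_pmf.finite_measure_Union) auto
    moreover have "(F \<inter> {x. x ! a = True}) \<union> (F \<inter> {x. x ! a = False}) = F" by auto
    ultimately show ?thesis by simp
  qed
  have T: "measure_pmf.prob D (F \<inter> {x. x ! a = True}) = measure_pmf.prob D F / 2"
    using sw[of True] tot by simp
  have Fa: "measure_pmf.prob D (F \<inter> {x. x ! a = False}) = measure_pmf.prob D F / 2"
    using sw[of True] tot by simp
  have "C = {} \<or> C = {True} \<or> C = {False} \<or> C = UNIV"
    by (rule bool_set_cases)
  then show ?thesis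
  proof (elim disjE)
    assume "C = {}" then show ?thesis by simp
  next
    assume "C = {True}" then show ?thesis using T by simp
  next
    assume "C = {False}" then show ?thesis using Fa by simp
  next
    assume "C = UNIV" then show ?thesis by (simp add: UNIV_bool)
  qed
qed

lemma prod_bits:
  fixes D :: "bits pmf"
  assumes supp: "set_pmf D \<subseteq> cube n" and I: "I \<subseteq> {..<n}"
    and inv: "\<forall>a\<in>I. map_pmf (flip a) D = D"
    and fin: "finite K" and KI: "K \<subseteq> I"
  shows "\<forall>F. (\<forall>a\<in>I. \<forall>x\<in>cube n. flip a x \<in> F \<longleftrightarrow> x \<in> F) \<longrightarrow>
    measure_pmf.prob D (F \<inter> {x. \<forall>i\<in>K. x ! i \<in> C i}) = measure_pmf.prob D F * (\<Prod>i\<in>K. real (card (C i)) / 2)"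
  using fin KI
proof (induction K rule: finite_induct)
  case empty
  then show ?case by simp
next
  case (insert a K)
  show ?case
  proof (intro allI impI)
    fix F assume F: "\<forall>a\<in>I. \<forall>x\<in>cube n. flip a x \<in> F \<longleftrightarrow> x \<in> F"
    let ?G = "F \<inter> {x. \<forall>i\<in>K. x ! i \<in> C i}"
    have aI: "a \<in> I" using insert.prems by auto
    have G: "\<forall>x\<in>cube n. flip a x \<in> ?G \<longleftrightarrow> x \<in> ?G"
    proof
      fix x assume x: "x \<in> cube n"
      have e: "\<forall>i\<in>K. flip a x ! i = x ! i" using insert(2) by (metis nth_flip)
      have fx: "flip a x \<in> F \<longleftrightarrow> x \<in> F" using F aI x by blast
      show "flip a x \<in> ?G \<longleftrightarrow> x \<in> ?G" using e fx by simp
    qed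
    have eq: "F \<inter> {x. \<forall>i\<in>insert a K. x ! i \<in> C i} = ?G \<inter> {x. x ! a \<in> C a}" by auto
    have an: "a < n" using aI I by auto
    have ia: "map_pmf (flip a) D = D" using aI inv by blast
    have h1: "measure_pmf.prob D (?G \<inter> {x. x ! a \<in> C a}) = real (card (C a)) / 2 * measure_pmf.prob D ?G"
      by (rule half_split[OF supp an ia G])
    have KI: "K \<subseteq> I" using insert.prems by blast
    have h2: "measure_pmf.prob D ?G = measure_pmf.prob D F * (\<Prod>i\<in>K. real (card (C i)) / 2)"
      using insert.IH[OF KI] F by blast
    have h3: "(\<Prod>i\<in>insert a K. real (card (C i)) / 2) = real (card (C a)) / 2 * (\<Prod>i\<in>K. real (card (C i)) / 2)"
      by (rule prod.insert[OF insert(1,2)])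
    show "measure_pmf.prob D (F \<inter> {x. \<forall>i\<in>insert a K. x ! i \<in> C i}) =
        measure_pmf.prob D F * (\<Prod>i\<in>insert a K. real (card (C i)) / 2)"
      unfolding eq h1 h2 h3 by (simp only: ac_simps)
  qed
qed

lemma single_bit:
  fixes D :: "bits pmf"
  assumes supp: "set_pmf D \<subseteq> cube n" and I: "I \<subseteq> {..<n}"
    and inv: "\<forall>a\<in>I. map_pmf (flip a) D = D" and i: "i \<in> I"
  shows "measure_pmf.prob D {x. x ! i \<in> C} = real (card C) / 2"
proof -
  have "measure_pmf.prob D (UNIV \<inter> {x. \<forall>j\<in>{i}. x ! j \<in> (\<lambda>_. C) j}) =
      measure_pmf.prob D UNIV * (\<Prod>j\<in>{i}. real (card ((\<lambda>_. C) j)) / 2)"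
    using prod_bits[OF supp I inv, of "{i}" "\<lambda>_. C"] i by blast
  then show ?thesis by simp
qed

lemma bf_none_flip:
  assumes "a \<in> I"
  shows "bit_family n I None (flip a x) = bit_family n I None x"
proof -
  have "\<forall>l. l \<notin> I \<longrightarrow> flip a x ! l = x ! l" using assms nth_flip by metis
  then show ?thesis unfolding bit_family_def by simp
qed

lemma pure_main:
  fixes D :: "bits pmf"
  assumes supp: "set_pmf D \<subseteq> cube n" and I: "I \<subseteq> {..<n}"
    and inv: "\<forall>a\<in>I. map_pmf (flip a) D = D"
  shows "prob_space.indep_vars (measure_pmf D) (\<lambda>_. count_space UNIV) (bit_family n I) (Some ` I \<union> {None})
     \<and> (\<forall>i\<in>I. \<forall>b. measure_pmf.prob D {x. x ! i = b} = 1 / 2)"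
proof
  show "\<forall>i\<in>I. \<forall>b. measure_pmf.prob D {x. x ! i = b} = 1 / 2"
  proof (intro ballI allI)
    fix i b assume i: "i \<in> I"
    have "measure_pmf.prob D {x. x ! i \<in> {b}} = real (card {b}) / 2"
      by (rule single_bit[OF supp I inv i])
    then show "measure_pmf.prob D {x. x ! i = b} = 1 / 2" by simp
  qed
next
  show "prob_space.indep_vars (measure_pmf D) (\<lambda>_. count_space UNIV) (bit_family n I) (Some ` I \<union> {None})"
    unfolding prob_space.indep_vars_def2[OF prob_space_measure_pmf] prob_space.indep_sets_def[OF prob_space_measure_pmf]
  proof (intro conjI ballI allI impI)
    fix j assume "j \<in> Some ` I \<union> {None}"
    show "bit_family n I j \<in> measurable (measure_pmf D) (count_space UNIV)" by simp
  next
    fix j assume "j \<in> Some ` I \<union> {None}"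
    show "{bit_family n I j -` A \<inter> space (measure_pmf D) |A. A \<in> sets (count_space UNIV)} \<subseteq> measure_pmf.events D"
      by simp
  next
    fix J A
    assume J: "J \<subseteq> Some ` I \<union> {None}" and Jne: "J \<noteq> {}" and Jfin: "finite J"
      and A: "A \<in> (\<Pi> j\<in>J. {bit_family n I j -` A \<inter> space (measure_pmf D) |A. A \<in> sets (count_space UNIV)})"
    have "\<forall>j\<in>J. \<exists>B. A j = bit_family n I j -` B" using A by auto
    then obtain B where B: "\<forall>j\<in>J. A j = bit_family n I j -` B j" by metis
    define K where "K = Some -` J"
    define C where "C i = {b. Inl b \<in> B (Some i)}" for i
    define F where "F = (if None \<in> J then bit_family n I None -` B None else UNIV)"
    have Kfin: "finite K" unfolding K_def using Jfin by (auto intro: finite_vimageI)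
    have KI: "K \<subseteq> I" unfolding K_def using J by auto
    have Finv: "\<forall>a\<in>I. \<forall>x\<in>cube n. flip a x \<in> F \<longleftrightarrow> x \<in> F"
      unfolding F_def using bf_none_flip by auto
    have inter: "(\<Inter>j\<in>J. A j) = F \<inter> {x. \<forall>i\<in>K. x ! i \<in> C i}"
    proof (intro set_eqI iffI)
      fix x assume x: "x \<in> (\<Inter>j\<in>J. A j)"
      show "x \<in> F \<inter> {x. \<forall>i\<in>K. x ! i \<in> C i}"
        using x B unfolding F_def K_def C_def by (auto simp: bit_family_def)
    next
      fix x assume x: "x \<in> F \<inter> {x. \<forall>i\<in>K. x ! i \<in> C i}"
      show "x \<in> (\<Inter>j\<in>J. A j)"
      proof
        fix j assume j: "j \<in> J"
        show "x \<in> A j"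
        proof (cases j)
          case None then show ?thesis using x j B unfolding F_def by auto
        next
          case (Some i) then show ?thesis using x j B unfolding K_def C_def by (auto simp: bit_family_def)
        qed
      qed
    qed
    have lhs: "measure_pmf.prob D (\<Inter>j\<in>J. A j) = measure_pmf.prob D F * (\<Prod>i\<in>K. real (card (C i)) / 2)"
      unfolding inter using prod_bits[OF supp I inv Kfin KI] Finv by blast
    have Jsplit: "J = Some ` K \<union> (J \<inter> {None})" unfolding K_def
    proof (intro set_eqI iffI)
      fix x assume "x \<in> J" then show "x \<in> Some ` Some -` J \<union> J \<inter> {None}" by (cases x) auto
    qed auto
    have "(\<Prod>j\<in>J. measure_pmf.prob D (A j)) = (\<Prod>j\<in>Some ` K. measure_pmf.prob D (A j)) * (\<Prod>j\<in>J \<inter> {None}. measure_pmf.prob D (A j))"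
      by (subst Jsplit, rule prod.union_disjoint) (use Kfin in auto)
    also have "(\<Prod>j\<in>Some ` K. measure_pmf.prob D (A j)) = (\<Prod>i\<in>K. measure_pmf.prob D (A (Some i)))"
      by (simp add: prod.reindex)
    also have "\<dots> = (\<Prod>i\<in>K. real (card (C i)) / 2)"
    proof (rule prod.cong[OF refl])
      fix i assume i: "i \<in> K"
      have "A (Some i) = {x. x ! i \<in> C i}" using B i unfolding K_def C_def by (auto simp: bit_family_def)
      then show "measure_pmf.prob D (A (Some i)) = real (card (C i)) / 2"
        using single_bit[OF supp I inv] i KI by auto
    qed
    also have "(\<Prod>j\<in>J \<inter> {None}. measure_pmf.prob D (A j)) = measure_pmf.prob D F"
      unfolding F_def using B by auto
    finally show "measure_pmf.prob D (\<Inter>j\<in>J. A j) = (\<Prod>j\<in>J. measure_pmf.prob D (A j))"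
      using lhs by simp
  qed
qed


definition fcap :: "(bits \<Rightarrow> real) \<Rightarrow> real \<Rightarrow> bits \<Rightarrow> real" where
  "fcap f c y = (if f y \<le> c then f y else c + 1)"

definition Good :: "nat \<Rightarrow> nat \<Rightarrow> (bits list \<times> 's) set" where
  "Good \<mu> n = {st. length (fst st) = \<mu> \<and> set (fst st) \<subseteq> cube n}"

definition Lc :: "(bits \<Rightarrow> real) \<Rightarrow> real \<Rightarrow> bits list \<times> 's \<Rightarrow> bool" where
  "Lc f c st = (\<forall>e\<in>set (fst st). f e \<le> c)"

definition phi :: "nat \<Rightarrow> bits list \<times> 's \<Rightarrow> bits list \<times> 's" where
  "phi a st = (map (flip a) (fst st), snd st)"

lemma fcap_gt: "fcap f c e > c \<longleftrightarrow> f e > c"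
  unfolding fcap_def by auto

lemma il_supp: "xs \<in> set_pmf (indep_list ps) \<Longrightarrow> length xs = length ps \<and> (\<forall>i<length ps. xs ! i \<in> set_pmf (ps ! i))"
proof (induction ps arbitrary: xs)
  case Nil then show ?case by simp
next
  case (Cons p ps)
  then obtain x xs' where "xs = x # xs'" "x \<in> set_pmf p" "xs' \<in> set_pmf (indep_list ps)" by auto
  with Cons.IH[of xs'] show ?case by (auto simp: nth_Cons split: nat.split)
qed

lemma il_map: "map_pmf (map g) (indep_list ps) = indep_list (map (map_pmf g) ps)"
proof (induction ps)
  case Nil then show ?case by simp
next
  case (Cons p ps)
  have e: "map_pmf (\<lambda>xa. g x # map g xa) (indep_list ps) = map_pmf (Cons (g x)) (map_pmf (map g) (indep_list ps))" for x
    by (simp add: pmf.map_comp o_def)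
  show ?case by (simp add: map_bind_pmf bind_map_pmf pmf.map_comp o_def e Cons.IH)
qed

lemma finite_cube: "finite (cube n)"
proof -
  have "cube n = {xs. set xs \<subseteq> (UNIV :: bool set) \<and> length xs = n}" unfolding cube_def by auto
  then show ?thesis using finite_lists_length_eq[of "UNIV :: bool set" n] by simp
qed

lemma cube_ne: "cube n \<noteq> {}"
  unfolding cube_def by (metis (mono_tags) empty_Collect_eq length_replicate)

lemma set_uniform_cube[simp]: "set_pmf (uniform_cube n) = cube n"
  unfolding uniform_cube_def using finite_cube cube_ne by simp

lemma flip_image_cube: "flip a ` cube n = cube n"
proof
  show "flip a ` cube n \<subseteq> cube n" by auto
  show "cube n \<subseteq> flip a ` cube n"
  proof
    fix x assume "x \<in> cube n"
    then show "x \<in> flip a ` cube n" by (metis flip_cube flip_flip imageI)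
  qed
qed

lemma uniform_cube_inv: "map_pmf (flip a) (uniform_cube n) = uniform_cube n"
  unfolding uniform_cube_def
  by (subst map_pmf_of_set_inj) (use inj_flip finite_cube cube_ne flip_image_cube in \<open>auto intro: inj_on_subset\<close>)

lemma set_subset_nth: "(\<forall>i<length xs. xs ! i \<in> A) \<Longrightarrow> set xs \<subseteq> A"
  by (auto simp: in_set_conv_nth)

lemma step_decomp:
  "y \<in> set_pmf (ea_step lam g vary select (P, s)) \<longleftrightarrow>
    (\<exists>par ops Q r. (par, ops) \<in> set_pmf (vary s) \<and>
       Q \<in> set_pmf (indep_list (map (\<lambda>j. (ops ! j) (P ! (par ! j))) [0..<lam])) \<and>
       r \<in> set_pmf (select s (par, ops) (map g (P @ Q))) \<and>
       y = (map (\<lambda>i. (P @ Q) ! i) (fst r), snd r))"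
proof
  assume "y \<in> set_pmf (ea_step lam g vary select (P, s))"
  then show "\<exists>par ops Q r. (par, ops) \<in> set_pmf (vary s) \<and>
       Q \<in> set_pmf (indep_list (map (\<lambda>j. (ops ! j) (P ! (par ! j))) [0..<lam])) \<and>
       r \<in> set_pmf (select s (par, ops) (map g (P @ Q))) \<and>
       y = (map (\<lambda>i. (P @ Q) ! i) (fst r), snd r)"
    unfolding ea_step_def by (auto simp: split_beta) blast
next
  assume "\<exists>par ops Q r. (par, ops) \<in> set_pmf (vary s) \<and>
       Q \<in> set_pmf (indep_list (map (\<lambda>j. (ops ! j) (P ! (par ! j))) [0..<lam])) \<and>
       r \<in> set_pmf (select s (par, ops) (map g (P @ Q))) \<and>
       y = (map (\<lambda>i. (P @ Q) ! i) (fst r), snd r)"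
  then obtain par ops Q r where ch: "(par, ops) \<in> set_pmf (vary s)" and
       Q: "Q \<in> set_pmf (indep_list (map (\<lambda>j. (ops ! j) (P ! (par ! j))) [0..<lam]))" and
       r: "r \<in> set_pmf (select s (par, ops) (map g (P @ Q)))" and
       yd: "y = (map (\<lambda>i. (P @ Q) ! i) (fst r), snd r)" by blast
  have 1: "y \<in> set_pmf (map_pmf (\<lambda>(sel, s'). (map (\<lambda>i. (P @ Q) ! i) sel, s')) (select s (par, ops) (map g (P @ Q))))"
    using r yd by (auto simp: split_beta)
  have 2: "y \<in> set_pmf (bind_pmf (indep_list (map (\<lambda>j. (ops ! j) (P ! (par ! j))) [0..<lam])) (\<lambda>Q.
           map_pmf (\<lambda>(sel, s'). (map (\<lambda>i. (P @ Q) ! i) sel, s')) (select s (par, ops) (map g (P @ Q)))))"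
    using 1 Q by auto
  show "y \<in> set_pmf (ea_step lam g vary select (P, s))"
    unfolding ea_step_def prod.case set_bind_pmf by (rule UN_I[OF ch]) (use 2 in simp)
qed

lemma step_support:
  assumes alg: "elitist_unbiased_alg n \<mu> lam vary select"
    and G: "(P, s) \<in> Good \<mu> n"
    and y: "y \<in> set_pmf (ea_step lam g vary select (P, s))"
  shows "y \<in> Good \<mu> n"
proof -
  obtain par ops Q r where ch: "(par, ops) \<in> set_pmf (vary s)"
    and Q: "Q \<in> set_pmf (indep_list (map (\<lambda>j. (ops ! j) (P ! (par ! j))) [0..<lam]))"
    and r: "r \<in> set_pmf (select s (par, ops) (map g (P @ Q)))"
    and yd: "y = (map (\<lambda>i. (P @ Q) ! i) (fst r), snd r)"
    using y unfolding step_decomp by blast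
  have P: "length P = \<mu>" "set P \<subseteq> cube n" using G by (auto simp: Good_def)
  have chp: "length par = lam" "set par \<subseteq> {..<\<mu>}" "length ops = lam" "\<forall>V\<in>set ops. unary_unbiased n V"
  proof -
    have "\<forall>s. \<forall>ch\<in>set_pmf (vary s). length (fst ch) = lam \<and> set (fst ch) \<subseteq> {..<\<mu>} \<and> length (snd ch) = lam \<and>
        (\<forall>V\<in>set (snd ch). unary_unbiased n V)" using alg unfolding elitist_unbiased_alg_def by blast
    then have "length (fst (par, ops)) = lam \<and> set (fst (par, ops)) \<subseteq> {..<\<mu>} \<and> length (snd (par, ops)) = lam \<and>
        (\<forall>V\<in>set (snd (par, ops)). unary_unbiased n V)" using ch by blast
    then show "length par = lam" "set par \<subseteq> {..<\<mu>}" "length ops = lam" "\<forall>V\<in>set ops. unary_unbiased n V" by auto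
  qed
  have Ql: "length Q = lam" and Qe: "\<forall>j<lam. Q ! j \<in> set_pmf ((ops ! j) (P ! (par ! j)))"
    using il_supp[OF Q] by auto
  have Qc: "set Q \<subseteq> cube n"
  proof (rule set_subset_nth, intro allI impI)
    fix j assume j: "j < length Q"
    have "par ! j \<in> set par" using j Ql chp(1) by simp
    then have pj: "par ! j < \<mu>" using chp(2) by auto
    have "P ! (par ! j) \<in> set P" using pj P(1) by simp
    then have "P ! (par ! j) \<in> cube n" using P(2) by blast
    moreover have "ops ! j \<in> set ops" using j Ql chp(3) by simp
    then have "unary_unbiased n (ops ! j)" using chp(4) by blast
    ultimately have "set_pmf ((ops ! j) (P ! (par ! j))) \<subseteq> cube n" unfolding unary_unbiased_def by blast
    then show "Q ! j \<in> cube n" using Qe j Ql by blast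
  qed
  have "\<forall>s ch fl. length fl = \<mu> + lam \<longrightarrow> (\<forall>r\<in>set_pmf (select s ch fl). best_selection \<mu> fl (fst r))"
    using alg unfolding elitist_unbiased_alg_def by blast
  moreover have "length (map g (P @ Q)) = \<mu> + lam" using P Ql by simp
  ultimately have bs: "best_selection \<mu> (map g (P @ Q)) (fst r)" using r by blast
  then have sl: "length (fst r) = \<mu>" "set (fst r) \<subseteq> {..<\<mu> + lam}"
    unfolding best_selection_def using P Ql by auto
  have PQ: "set (P @ Q) \<subseteq> cube n" using P Qc by auto
  have "set (map (\<lambda>i. (P @ Q) ! i) (fst r)) \<subseteq> cube n"
  proof
    fix x assume "x \<in> set (map (\<lambda>i. (P @ Q) ! i) (fst r))"
    then obtain i where i: "i \<in> set (fst r)" and x: "x = (P @ Q) ! i" by auto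
    have "i < length (P @ Q)" using i sl P Ql by auto
    then show "x \<in> cube n" using x PQ nth_mem by blast
  qed
  then show ?thesis unfolding yd Good_def using sl by simp
qed

lemma run_support:
  assumes alg: "elitist_unbiased_alg n \<mu> lam vary select"
  shows "set_pmf (ea_run n \<mu> lam g init vary select t) \<subseteq> Good \<mu> n"
proof (induction t)
  case 0
  show ?case
  proof
    fix st assume "st \<in> set_pmf (ea_run n \<mu> lam g init vary select 0)"
    then obtain P where P: "P \<in> set_pmf (indep_list (replicate \<mu> (uniform_cube n)))" and st: "fst st = P"
      by (auto simp: ea_init_def)
    from il_supp[OF P] show "st \<in> Good \<mu> n" unfolding Good_def using st
      by (auto intro!: set_subset_nth)
  qed
next
  case (Suc t)
  show ?case
  proof
    fix y assume "y \<in> set_pmf (ea_run n \<mu> lam g init vary select (Suc t))"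
    then obtain x where x: "x \<in> set_pmf (ea_run n \<mu> lam g init vary select t)"
      and y: "y \<in> set_pmf (ea_step lam g vary select x)" by auto
    obtain P s where "x = (P, s)" by fastforce
    then show "y \<in> Good \<mu> n" using step_support[OF alg, of P s y g] x y Suc by auto
  qed
qed


lemma elit:
  assumes bs: "best_selection \<mu> (map g L) sel" and mu: "0 < \<mu>"
    and e: "e \<in> set L" and fe: "f e > c" and gf: "\<forall>e. g e > c \<longleftrightarrow> f e > c"
  shows "\<exists>i\<in>set sel. f (L ! i) > c"
proof -
  obtain j where j: "j < length L" and ej: "L ! j = e" using e by (auto simp: in_set_conv_nth)
  show ?thesis
  proof (cases "j \<in> set sel")
    case True then show ?thesis using ej fe by blast
  next
    case False
    have ls: "length sel = \<mu>" using bs unfolding best_selection_def by blast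
    then obtain i where i: "i \<in> set sel" using mu by (cases sel) auto
    have il: "i < length L" using bs i unfolding best_selection_def by auto
    have "(map g L) ! j \<le> (map g L) ! i" using bs i j False unfolding best_selection_def by auto
    then have "g e \<le> g (L ! i)" using j il ej by simp
    moreover have "g e > c" using gf fe by blast
    ultimately have "g (L ! i) > c" by linarith
    then have "f (L ! i) > c" using gf by blast
    then show ?thesis using i by blast
  qed
qed

lemma alg_sel:
  assumes alg: "elitist_unbiased_alg n \<mu> lam vary select"
    and "length fl = \<mu> + lam" and "r \<in> set_pmf (select s ch fl)"
  shows "best_selection \<mu> fl (fst r)"
proof -
  have "\<forall>s ch fl. length fl = \<mu> + lam \<longrightarrow> (\<forall>r\<in>set_pmf (select s ch fl). best_selection \<mu> fl (fst r))"
    using alg unfolding elitist_unbiased_alg_def by blast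
  then show ?thesis using assms(2,3) by blast
qed

lemma sel_bad:
  assumes alg: "elitist_unbiased_alg n \<mu> lam vary select" and mu: "0 < \<mu>"
    and len: "length (P @ Q) = \<mu> + lam"
    and gf: "\<forall>e. g e > c \<longleftrightarrow> f e > c"
    and e: "e \<in> set (P @ Q)" and fe: "f e > c"
    and r: "r \<in> set_pmf (select s ch (map g (P @ Q)))"
  shows "\<not> Lc f c (map (\<lambda>i. (P @ Q) ! i) (fst r), snd r)"
proof -
  have bs: "best_selection \<mu> (map g (P @ Q)) (fst r)"
    using alg_sel[OF alg _ r] len by simp
  obtain i where i: "i \<in> set (fst r)" and fi: "f ((P @ Q) ! i) > c"
    using elit[OF bs mu e fe gf] by blast
  have "(P @ Q) ! i \<in> set (map (\<lambda>i. (P @ Q) ! i) (fst r))" using i by simp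
  then show ?thesis unfolding Lc_def using fi by force
qed

lemma step_bad:
  assumes alg: "elitist_unbiased_alg n \<mu> lam vary select" and mu: "0 < \<mu>"
    and P: "length P = \<mu>" and gf: "\<forall>e. g e > c \<longleftrightarrow> f e > c"
    and e: "e \<in> set P" and fe: "f e > c"
    and y: "y \<in> set_pmf (ea_step lam g vary select (P, s))"
  shows "\<not> Lc f c y"
proof -
  obtain par ops Q r where ch: "(par, ops) \<in> set_pmf (vary s)"
    and Q: "Q \<in> set_pmf (indep_list (map (\<lambda>j. (ops ! j) (P ! (par ! j))) [0..<lam]))"
    and r: "r \<in> set_pmf (select s (par, ops) (map g (P @ Q)))"
    and yd: "y = (map (\<lambda>i. (P @ Q) ! i) (fst r), snd r)"
    using y unfolding step_decomp by blast
  have Ql: "length Q = lam" using il_supp[OF Q] by simp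
  show ?thesis unfolding yd
    by (rule sel_bad[OF alg mu _ gf _ fe r]) (use P Ql e in auto)
qed

lemma pmf_bind_cong_pt:
  assumes "\<And>x. x \<in> set_pmf M \<Longrightarrow> pmf (h1 x) y = pmf (h2 x) y"
  shows "pmf (bind_pmf M h1) y = pmf (bind_pmf M h2) y"
  unfolding pmf_bind
  by (rule integral_cong_AE) (use assms in \<open>auto simp: AE_measure_pmf_iff\<close>)

lemma step_eq:
  assumes alg: "elitist_unbiased_alg n \<mu> lam vary select" and mu: "0 < \<mu>"
    and P: "length P = \<mu>" and y: "Lc f c y"
  shows "pmf (ea_step lam f vary select (P, s)) y = pmf (ea_step lam (fcap f c) vary select (P, s)) y"
  unfolding ea_step_def prod.case
proof (rule pmf_bind_cong_pt)
  fix ch assume ch: "ch \<in> set_pmf (vary s)"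
  obtain par ops where chd: "ch = (par, ops)" by fastforce
  show "pmf (case ch of (par, ops) \<Rightarrow> bind_pmf (indep_list (map (\<lambda>j. (ops ! j) (P ! (par ! j))) [0..<lam])) (\<lambda>Q.
           map_pmf (\<lambda>(sel, s'). (map (\<lambda>i. (P @ Q) ! i) sel, s')) (select s (par, ops) (map f (P @ Q))))) y =
        pmf (case ch of (par, ops) \<Rightarrow> bind_pmf (indep_list (map (\<lambda>j. (ops ! j) (P ! (par ! j))) [0..<lam])) (\<lambda>Q.
           map_pmf (\<lambda>(sel, s'). (map (\<lambda>i. (P @ Q) ! i) sel, s')) (select s (par, ops) (map (fcap f c) (P @ Q))))) y"
    unfolding chd prod.case
  proof (rule pmf_bind_cong_pt)
    fix Q assume Q: "Q \<in> set_pmf (indep_list (map (\<lambda>j. (ops ! j) (P ! (par ! j))) [0..<lam]))"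
    have len: "length (P @ Q) = \<mu> + lam" using il_supp[OF Q] P by simp
    show "pmf (map_pmf (\<lambda>(sel, s'). (map (\<lambda>i. (P @ Q) ! i) sel, s')) (select s (par, ops) (map f (P @ Q)))) y =
          pmf (map_pmf (\<lambda>(sel, s'). (map (\<lambda>i. (P @ Q) ! i) sel, s')) (select s (par, ops) (map (fcap f c) (P @ Q)))) y"
    proof (cases "\<forall>e\<in>set (P @ Q). f e \<le> c")
      case True
      then have eq: "map f (P @ Q) = map (fcap f c) (P @ Q)" unfolding fcap_def by (intro map_cong) auto
      show ?thesis by (simp only: eq)
    next
      case False
      then obtain e where e: "e \<in> set (P @ Q)" and fe: "f e > c" by force
      have gf1: "\<forall>e. f e > c \<longleftrightarrow> f e > c" by blast
      have gf2: "\<forall>e. fcap f c e > c \<longleftrightarrow> f e > c" using fcap_gt by blast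
      have "y \<notin> set_pmf (map_pmf (\<lambda>(sel, s'). (map (\<lambda>i. (P @ Q) ! i) sel, s')) (select s (par, ops) (map g (P @ Q))))"
        if gf: "\<forall>e. g e > c \<longleftrightarrow> f e > c" for g
      proof
        assume "y \<in> set_pmf (map_pmf (\<lambda>(sel, s'). (map (\<lambda>i. (P @ Q) ! i) sel, s')) (select s (par, ops) (map g (P @ Q))))"
        then obtain r where r: "r \<in> set_pmf (select s (par, ops) (map g (P @ Q)))"
          and yd: "y = (map (\<lambda>i. (P @ Q) ! i) (fst r), snd r)" by (auto simp: split_beta)
        show False using sel_bad[OF alg mu len gf e fe r] y yd by simp
      qed
      then have z1: "pmf (map_pmf (\<lambda>(sel, s'). (map (\<lambda>i. (P @ Q) ! i) sel, s')) (select s (par, ops) (map f (P @ Q)))) y = 0"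
        and z2: "pmf (map_pmf (\<lambda>(sel, s'). (map (\<lambda>i. (P @ Q) ! i) sel, s')) (select s (par, ops) (map (fcap f c) (P @ Q)))) y = 0"
        using gf1 gf2 unfolding pmf_eq_0_set_pmf by blast+
      show ?thesis by (simp only: z1 z2)
    qed
  qed
qed


lemma run_eq:
  assumes alg: "elitist_unbiased_alg n \<mu> lam vary select" and mu: "0 < \<mu>"
  shows "\<forall>y. Lc f c y \<longrightarrow> pmf (ea_run n \<mu> lam f init vary select t) y = pmf (ea_run n \<mu> lam (fcap f c) init vary select t) y"
proof (induction t)
  case 0
  show ?case
  proof (intro allI impI)
    fix y :: "bits list \<times> 'a" assume y: "Lc f c y"
    show "pmf (ea_run n \<mu> lam f init vary select 0) y = pmf (ea_run n \<mu> lam (fcap f c) init vary select 0) y"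
      unfolding ea_run.simps ea_init_def
    proof (rule pmf_bind_cong_pt)
      fix P assume P: "P \<in> set_pmf (indep_list (replicate \<mu> (uniform_cube n)))"
      show "pmf (map_pmf (\<lambda>s. (P, s)) (init (map f P))) y = pmf (map_pmf (\<lambda>s. (P, s)) (init (map (fcap f c) P))) y"
      proof (cases "P = fst y")
        case True
        then have eq: "map f P = map (fcap f c) P" using y unfolding Lc_def fcap_def by (intro map_cong) auto
        show ?thesis by (simp only: eq)
      next
        case False
        then have "y \<notin> set_pmf (map_pmf (\<lambda>s. (P, s)) (init (map g P)))" for g by auto
        then have z1: "pmf (map_pmf (\<lambda>s. (P, s)) (init (map f P))) y = 0"
          and z2: "pmf (map_pmf (\<lambda>s. (P, s)) (init (map (fcap f c) P))) y = 0"
          unfolding pmf_eq_0_set_pmf by blast+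
        show ?thesis by (simp only: z1 z2)
      qed
    qed
  qed
next
  case (Suc t)
  show ?case
  proof (intro allI impI)
    fix y :: "bits list \<times> 'a" assume y: "Lc f c y"
    let ?M = "ea_run n \<mu> lam f init vary select t"
    let ?M' = "ea_run n \<mu> lam (fcap f c) init vary select t"
    let ?K = "ea_step lam f vary select"
    let ?K' = "ea_step lam (fcap f c) vary select"
    have "ennreal (pmf (bind_pmf ?M ?K) y) = ennreal (pmf (bind_pmf ?M' ?K') y)"
      unfolding ennreal_pmf_bind nn_integral_measure_pmf
    proof (rule nn_integral_cong)
      fix x :: "bits list \<times> 'a"
      obtain P s where xd: "x = (P, s)" by fastforce
      show "ennreal (pmf ?M x) * ennreal (pmf (?K x) y) = ennreal (pmf ?M' x) * ennreal (pmf (?K' x) y)"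
      proof (cases "length P = \<mu>")
        case False
        then have "x \<notin> Good \<mu> n" unfolding xd Good_def by simp
        then have "x \<notin> set_pmf ?M" "x \<notin> set_pmf ?M'" using run_support[OF alg] by blast+
        then have z1: "pmf ?M x = 0" and z2: "pmf ?M' x = 0" unfolding pmf_eq_0_set_pmf by blast+
        show ?thesis by (simp only: z1 z2) simp
      next
        case len: True
        show ?thesis
        proof (cases "Lc f c x")
          case True
          have e1: "pmf ?M x = pmf ?M' x" using Suc.IH True by blast
          have e2: "pmf (?K x) y = pmf (?K' x) y" unfolding xd by (rule step_eq[OF alg mu len y])
          show ?thesis by (simp only: e1 e2)
        next
          case False
          then obtain e where e: "e \<in> set P" and fe: "f e > c" unfolding Lc_def xd by force
          have gf1: "\<forall>e. f e > c \<longleftrightarrow> f e > c" by blast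
          have gf2: "\<forall>e. fcap f c e > c \<longleftrightarrow> f e > c" using fcap_gt by blast
          have "y \<notin> set_pmf (?K x)" using step_bad[OF alg mu len gf1 e fe] y unfolding xd by blast
          moreover have "y \<notin> set_pmf (?K' x)" using step_bad[OF alg mu len gf2 e fe] y unfolding xd by blast
          ultimately have z1: "pmf (?K x) y = 0" and z2: "pmf (?K' x) y = 0" unfolding pmf_eq_0_set_pmf by blast+
          show ?thesis by (simp only: z1 z2) simp
        qed
      qed
    qed
    then show "pmf (ea_run n \<mu> lam f init vary select (Suc t)) y = pmf (ea_run n \<mu> lam (fcap f c) init vary select (Suc t)) y"
      by simp
  qed
qed


definition stepQ where
  "stepQ lam g select P s par ops = bind_pmf (indep_list (map (\<lambda>j. (ops ! j) (P ! (par ! j))) [0..<lam])) (\<lambda>Q.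
           map_pmf (\<lambda>(sel, s'). (map (\<lambda>i. (P @ Q) ! i) sel, s')) (select s (par, ops) (map g (P @ Q))))"

lemma ea_step_alt: "ea_step lam g vary select (P, s) = bind_pmf (vary s) (\<lambda>(par, ops). stepQ lam g select P s par ops)"
  unfolding ea_step_def stepQ_def by simp

lemma xorv_e:
  assumes "x \<in> cube n" "a < n"
  shows "xorv x ((replicate n False)[a := True]) = flip a x"
proof (rule nth_equalityI)
  show "length (xorv x ((replicate n False)[a := True])) = length (flip a x)"
    using assms by (simp add: xorv_def cube_def)
  fix i assume "i < length (xorv x ((replicate n False)[a := True]))"
  then have i: "i < n" "i < length x" using assms by (auto simp: xorv_def cube_def)
  show "xorv x ((replicate n False)[a := True]) ! i = flip a x ! i"
    using i assms by (cases "i = a") (auto simp: xorv_def flip_def cube_def nth_list_update)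
qed

lemma unbiased_flip:
  assumes V: "unary_unbiased n V" and x: "x \<in> cube n" and a: "a < n"
  shows "V (flip a x) = map_pmf (flip a) (V x)"
proof (rule pmf_eqI)
  fix y
  define e where "e = (replicate n False)[a := True]"
  have ec: "e \<in> cube n" unfolding e_def cube_def by simp
  have r: "pmf (map_pmf (flip a) (V x)) y = pmf (V x) (flip a y)"
    using pmf_map_inj'[OF inj_flip, of a "V x" "flip a y"] by simp
  show "pmf (V (flip a x)) y = pmf (map_pmf (flip a) (V x)) y"
  proof (cases "y \<in> cube n")
    case True
    then have fy: "flip a y \<in> cube n" by simp
    have "pmf (V x) (flip a y) = pmf (V (xorv x e)) (xorv (flip a y) e)"
      using V x fy ec unfolding unary_unbiased_def by blast
    also have "\<dots> = pmf (V (flip a x)) y"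
      unfolding e_def using xorv_e[OF x a] xorv_e[OF fy a] by simp
    finally show ?thesis using r by simp
  next
    case False
    have s1: "set_pmf (V (flip a x)) \<subseteq> cube n" using V x unfolding unary_unbiased_def by simp
    have s2: "set_pmf (V x) \<subseteq> cube n" using V x unfolding unary_unbiased_def by simp
    have "y \<notin> set_pmf (V (flip a x))" using s1 False by blast
    then have z1: "pmf (V (flip a x)) y = 0" unfolding pmf_eq_0_set_pmf .
    have "flip a y \<notin> set_pmf (V x)" using s2 False by auto
    then have z2: "pmf (V x) (flip a y) = 0" unfolding pmf_eq_0_set_pmf .
    show ?thesis using r z1 z2 by simp
  qed
qed

lemma fcap_flip:
  assumes hf: "\<forall>y\<in>cube n. f y \<le> c \<longrightarrow> f (flip a y) = f y" and y: "y \<in> cube n"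
  shows "fcap f c (flip a y) = fcap f c y"
proof (cases "f y \<le> c")
  case True then show ?thesis using hf y unfolding fcap_def by simp
next
  case False
  have "\<not> f (flip a y) \<le> c"
  proof
    assume "f (flip a y) \<le> c"
    moreover have "flip a y \<in> cube n" using y by simp
    ultimately have "f (flip a (flip a y)) = f (flip a y)" using hf by blast
    then show False using False \<open>f (flip a y) \<le> c\<close> by simp
  qed
  then show ?thesis using False unfolding fcap_def by simp
qed

lemma stepQ_inv:
  assumes ops: "\<forall>j<lam. (ops ! j) (flip a (P ! (par ! j))) = map_pmf (flip a) ((ops ! j) (P ! (par ! j)))"
    and parl: "\<forall>j<lam. par ! j < length P"
    and geq: "\<And>Q. Q \<in> set_pmf (indep_list (map (\<lambda>j. (ops ! j) (P ! (par ! j))) [0..<lam])) \<Longrightarrow>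
                 map g (map (flip a) P @ map (flip a) Q) = map g (P @ Q)"
    and sel: "\<And>Q r. Q \<in> set_pmf (indep_list (map (\<lambda>j. (ops ! j) (P ! (par ! j))) [0..<lam])) \<Longrightarrow>
                 r \<in> set_pmf (select s (par, ops) (map g (P @ Q))) \<Longrightarrow> set (fst r) \<subseteq> {..<length P + length Q}"
  shows "map_pmf (phi a) (stepQ lam g select P s par ops) = stepQ lam g select (map (flip a) P) s par ops"
proof -
  let ?IL = "indep_list (map (\<lambda>j. (ops ! j) (P ! (par ! j))) [0..<lam])"
  have meq: "map (\<lambda>j. (ops ! j) (map (flip a) P ! (par ! j))) [0..<lam] =
        map (map_pmf (flip a)) (map (\<lambda>j. (ops ! j) (P ! (par ! j))) [0..<lam])"
    unfolding map_map
  proof (rule map_cong[OF refl])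
    fix j assume "j \<in> set [0..<lam]"
    then have j: "j < lam" by simp
    then have "map (flip a) P ! (par ! j) = flip a (P ! (par ! j))" using parl by simp
    then show "(ops ! j) (map (flip a) P ! (par ! j)) = (map_pmf (flip a) \<circ> (\<lambda>j. (ops ! j) (P ! (par ! j)))) j"
      using ops j by simp
  qed
  have IL: "indep_list (map (\<lambda>j. (ops ! j) (map (flip a) P ! (par ! j))) [0..<lam]) = map_pmf (map (flip a)) ?IL"
    unfolding il_map by (simp only: meq)
  have "stepQ lam g select (map (flip a) P) s par ops =
     bind_pmf ?IL (\<lambda>Q. map_pmf (\<lambda>(sel, s'). (map (\<lambda>i. (map (flip a) P @ map (flip a) Q) ! i) sel, s'))
        (select s (par, ops) (map g (map (flip a) P @ map (flip a) Q))))"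
    unfolding stepQ_def IL bind_map_pmf by (simp add: o_def)
  also have "\<dots> = bind_pmf ?IL (\<lambda>Q. map_pmf (\<lambda>r. phi a ((\<lambda>(sel, s'). (map (\<lambda>i. (P @ Q) ! i) sel, s')) r))
        (select s (par, ops) (map g (P @ Q))))"
  proof (rule bind_pmf_cong[OF refl])
    fix Q assume Q: "Q \<in> set_pmf ?IL"
    show "map_pmf (\<lambda>(sel, s'). (map (\<lambda>i. (map (flip a) P @ map (flip a) Q) ! i) sel, s'))
        (select s (par, ops) (map g (map (flip a) P @ map (flip a) Q))) =
      map_pmf (\<lambda>r. phi a ((\<lambda>(sel, s'). (map (\<lambda>i. (P @ Q) ! i) sel, s')) r))
        (select s (par, ops) (map g (P @ Q)))"
      unfolding geq[OF Q]
    proof (rule map_pmf_cong[OF refl])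
      fix r assume r: "r \<in> set_pmf (select s (par, ops) (map g (P @ Q)))"
      have ix: "set (fst r) \<subseteq> {..<length P + length Q}" using sel[OF Q r] .
      have "map (\<lambda>i. (map (flip a) P @ map (flip a) Q) ! i) (fst r) = map (flip a) (map (\<lambda>i. (P @ Q) ! i) (fst r))"
      proof -
        have "\<forall>i\<in>set (fst r). (map (flip a) P @ map (flip a) Q) ! i = flip a ((P @ Q) ! i)"
        proof
          fix i assume "i \<in> set (fst r)"
          then have lt: "i < length (P @ Q)" using ix by auto
          have eq: "map (flip a) P @ map (flip a) Q = map (flip a) (P @ Q)" by simp
          show "(map (flip a) P @ map (flip a) Q) ! i = flip a ((P @ Q) ! i)" by (simp only: eq nth_map[OF lt])
        qed
        then show ?thesis by simp
      qed
      then show "(\<lambda>(sel, s'). (map (\<lambda>i. (map (flip a) P @ map (flip a) Q) ! i) sel, s')) r =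
          phi a ((\<lambda>(sel, s'). (map (\<lambda>i. (P @ Q) ! i) sel, s')) r)"
        unfolding phi_def by (simp add: split_beta)
    qed
  qed
  also have "\<dots> = map_pmf (phi a) (stepQ lam g select P s par ops)"
    unfolding stepQ_def map_bind_pmf pmf.map_comp by (simp add: o_def)
  finally show ?thesis by simp
qed


lemma alg_vary:
  assumes alg: "elitist_unbiased_alg n \<mu> lam vary select" and ch: "(par, ops) \<in> set_pmf (vary s)"
  shows "length par = lam \<and> set par \<subseteq> {..<\<mu>} \<and> length ops = lam \<and> (\<forall>V\<in>set ops. unary_unbiased n V)"
proof -
  have "\<forall>s. \<forall>ch\<in>set_pmf (vary s). length (fst ch) = lam \<and> set (fst ch) \<subseteq> {..<\<mu>} \<and> length (snd ch) = lam \<and>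
      (\<forall>V\<in>set (snd ch). unary_unbiased n V)" using alg unfolding elitist_unbiased_alg_def by blast
  then have "length (fst (par, ops)) = lam \<and> set (fst (par, ops)) \<subseteq> {..<\<mu>} \<and> length (snd (par, ops)) = lam \<and>
      (\<forall>V\<in>set (snd (par, ops)). unary_unbiased n V)" using ch by blast
  then show ?thesis by simp
qed

lemma Q_cube:
  assumes alg: "elitist_unbiased_alg n \<mu> lam vary select" and ch: "(par, ops) \<in> set_pmf (vary s)"
    and P: "length P = \<mu>" "set P \<subseteq> cube n"
    and Q: "Q \<in> set_pmf (indep_list (map (\<lambda>j. (ops ! j) (P ! (par ! j))) [0..<lam]))"
  shows "length Q = lam \<and> set Q \<subseteq> cube n"
proof -
  have chp: "length par = lam" "set par \<subseteq> {..<\<mu>}" "length ops = lam" "\<forall>V\<in>set ops. unary_unbiased n V"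
    using alg_vary[OF alg ch] by auto
  have Ql: "length Q = lam" and Qe: "\<forall>j<lam. Q ! j \<in> set_pmf ((ops ! j) (P ! (par ! j)))"
    using il_supp[OF Q] by auto
  have Qc: "set Q \<subseteq> cube n"
  proof (rule set_subset_nth, intro allI impI)
    fix j assume j: "j < length Q"
    have "par ! j \<in> set par" using j Ql chp(1) by simp
    then have pj: "par ! j < \<mu>" using chp(2) by auto
    have "P ! (par ! j) \<in> set P" using pj P(1) by simp
    then have "P ! (par ! j) \<in> cube n" using P(2) by blast
    moreover have "ops ! j \<in> set ops" using j Ql chp(3) by simp
    then have "unary_unbiased n (ops ! j)" using chp(4) by blast
    ultimately have "set_pmf ((ops ! j) (P ! (par ! j))) \<subseteq> cube n" unfolding unary_unbiased_def by blast
    then show "Q ! j \<in> cube n" using Qe j Ql by blast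
  qed
  show ?thesis using Ql Qc by simp
qed

lemma step_inv:
  assumes alg: "elitist_unbiased_alg n \<mu> lam vary select" and a: "a < n"
    and hg: "\<forall>y\<in>cube n. g (flip a y) = g y" and G: "(P, s) \<in> Good \<mu> n"
  shows "map_pmf (phi a) (ea_step lam g vary select (P, s)) = ea_step lam g vary select (phi a (P, s))"
proof -
  have P: "length P = \<mu>" "set P \<subseteq> cube n" using G unfolding Good_def by auto
  have ph: "phi a (P, s) = (map (flip a) P, s)" unfolding phi_def by simp
  show ?thesis unfolding ph ea_step_alt map_bind_pmf
  proof (rule bind_pmf_cong[OF refl])
    fix ch assume ch: "ch \<in> set_pmf (vary s)"
    obtain par ops where chd: "ch = (par, ops)" by fastforce
    have chp: "length par = lam" "set par \<subseteq> {..<\<mu>}" "length ops = lam" "\<forall>V\<in>set ops. unary_unbiased n V"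
      using alg_vary[OF alg ch[unfolded chd]] by auto
    have parl: "\<forall>j<lam. par ! j < length P"
    proof (intro allI impI)
      fix j assume "j < lam"
      then have "par ! j \<in> set par" using chp(1) by simp
      then show "par ! j < length P" using chp(2) P(1) by auto
    qed
    show "map_pmf (phi a) (case ch of (par, ops) \<Rightarrow> stepQ lam g select P s par ops) =
        (case ch of (par, ops) \<Rightarrow> stepQ lam g select (map (flip a) P) s par ops)"
      unfolding chd prod.case
    proof (rule stepQ_inv)
      show "\<forall>j<lam. (ops ! j) (flip a (P ! (par ! j))) = map_pmf (flip a) ((ops ! j) (P ! (par ! j)))"
      proof (intro allI impI)
        fix j assume j: "j < lam"
        have "ops ! j \<in> set ops" using j chp(3) by simp
        then have V: "unary_unbiased n (ops ! j)" using chp(4) by blast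
        have "P ! (par ! j) \<in> set P" using parl j by simp
        then have "P ! (par ! j) \<in> cube n" using P(2) by blast
        then show "(ops ! j) (flip a (P ! (par ! j))) = map_pmf (flip a) ((ops ! j) (P ! (par ! j)))"
          by (rule unbiased_flip[OF V _ a])
      qed
      show "\<forall>j<lam. par ! j < length P" by (rule parl)
    next
      fix Q assume Q: "Q \<in> set_pmf (indep_list (map (\<lambda>j. (ops ! j) (P ! (par ! j))) [0..<lam]))"
      have Qc: "length Q = lam \<and> set Q \<subseteq> cube n" using Q_cube[OF alg ch[unfolded chd] P Q] .
      have "set (P @ Q) \<subseteq> cube n" using P Qc by auto
      then have "map g (map (flip a) (P @ Q)) = map g (P @ Q)" using hg by auto
      then show "map g (map (flip a) P @ map (flip a) Q) = map g (P @ Q)" by simp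
    next
      fix Q r assume Q: "Q \<in> set_pmf (indep_list (map (\<lambda>j. (ops ! j) (P ! (par ! j))) [0..<lam]))"
        and r: "r \<in> set_pmf (select s (par, ops) (map g (P @ Q)))"
      have Qc: "length Q = lam \<and> set Q \<subseteq> cube n" using Q_cube[OF alg ch[unfolded chd] P Q] .
      have "best_selection \<mu> (map g (P @ Q)) (fst r)"
        by (rule alg_sel[OF alg _ r]) (use P Qc in simp)
      then show "set (fst r) \<subseteq> {..<length P + length Q}" unfolding best_selection_def by simp
    qed
  qed
qed

lemma run_inv:
  assumes alg: "elitist_unbiased_alg n \<mu> lam vary select" and a: "a < n"
    and hg: "\<forall>y\<in>cube n. g (flip a y) = g y"
  shows "map_pmf (phi a) (ea_run n \<mu> lam g init vary select t) = ea_run n \<mu> lam g init vary select t"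
proof (induction t)
  case 0
  let ?U = "indep_list (replicate \<mu> (uniform_cube n))"
  have U: "map_pmf (map (flip a)) ?U = ?U"
    unfolding il_map by (simp add: uniform_cube_inv)
  have "ea_run n \<mu> lam g init vary select 0 = bind_pmf (map_pmf (map (flip a)) ?U) (\<lambda>P. map_pmf (\<lambda>s. (P, s)) (init (map g P)))"
    unfolding U by (simp add: ea_init_def)
  also have "\<dots> = bind_pmf ?U (\<lambda>P. map_pmf (\<lambda>s. (map (flip a) P, s)) (init (map g (map (flip a) P))))"
    by (simp add: bind_map_pmf o_def)
  also have "\<dots> = bind_pmf ?U (\<lambda>P. map_pmf (\<lambda>s. (map (flip a) P, s)) (init (map g P)))"
  proof (rule bind_pmf_cong[OF refl])
    fix P assume P: "P \<in> set_pmf ?U"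
    have "set P \<subseteq> cube n" using il_supp[OF P] by (auto intro!: set_subset_nth)
    then have eq: "map g (map (flip a) P) = map g P" using hg by auto
    show "map_pmf (\<lambda>s. (map (flip a) P, s)) (init (map g (map (flip a) P))) = map_pmf (\<lambda>s. (map (flip a) P, s)) (init (map g P))"
      by (simp only: eq)
  qed
  also have "\<dots> = map_pmf (phi a) (ea_run n \<mu> lam g init vary select 0)"
    by (simp add: ea_init_def map_bind_pmf pmf.map_comp o_def phi_def)
  finally show ?case by simp
next
  case (Suc t)
  let ?M = "ea_run n \<mu> lam g init vary select t"
  have "map_pmf (phi a) (ea_run n \<mu> lam g init vary select (Suc t)) = bind_pmf ?M (\<lambda>x. map_pmf (phi a) (ea_step lam g vary select x))"
    by (simp add: map_bind_pmf)
  also have "\<dots> = bind_pmf ?M (\<lambda>x. ea_step lam g vary select (phi a x))"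
  proof (rule bind_pmf_cong[OF refl])
    fix x assume x: "x \<in> set_pmf ?M"
    obtain P s where xd: "x = (P, s)" by fastforce
    have "(P, s) \<in> Good \<mu> n" using x xd run_support[OF alg] by blast
    then show "map_pmf (phi a) (ea_step lam g vary select x) = ea_step lam g vary select (phi a x)"
      unfolding xd by (rule step_inv[OF alg a hg])
  qed
  also have "\<dots> = bind_pmf (map_pmf (phi a) ?M) (ea_step lam g vary select)"
    by (simp add: bind_map_pmf o_def)
  also have "\<dots> = ea_run n \<mu> lam g init vary select (Suc t)" using Suc.IH by simp
  finally show ?case .
qed


lemma phi_phi[simp]: "phi a (phi a x) = x"
  unfolding phi_def by (simp add: map_idI)

lemma inj_phi: "inj (phi a)"
  by (metis injI phi_phi)

theorem lemma4:
  fixes n \<mu> lam t k :: nat and f :: "bits \<Rightarrow> real" and c :: real and I :: "nat set"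
    and init :: "real list \<Rightarrow> 's pmf"
    and vary :: "'s \<Rightarrow> (nat list \<times> varop list) pmf"
    and select :: "'s \<Rightarrow> nat list \<times> varop list \<Rightarrow> real list \<Rightarrow> (nat list \<times> 's) pmf"
  assumes "c \<in> f ` cube n"
    and "I \<subseteq> {..<n}"
    and "\<forall>y\<in>cube n. f y \<le> c \<longrightarrow> (\<forall>z\<in>Zset n I. f (xorv y z) = f y)"
    and "elitist_unbiased_alg n \<mu> lam vary select"
    and "k \<in> {1..\<mu>}"
    and "measure_pmf.prob (ea_run n \<mu> lam f init vary select t) (best_is f c) > 0"
  shows "let D = map_pmf (\<lambda>st. fst st ! (k - 1))
                   (cond_pmf (ea_run n \<mu> lam f init vary select t) (best_is f c))
         in prob_space.indep_vars (measure_pmf D) (\<lambda>_. count_space UNIV) (bit_family n I) (Some ` I \<union> {None})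
            \<and> (\<forall>i\<in>I. \<forall>b. measure_pmf.prob D {x. x ! i = b} = 1 / 2)"
proof -
  note I = assms(2) and hz = assms(3) and alg = assms(4) and k = assms(5) and pos = assms(6)
  let ?M = "ea_run n \<mu> lam f init vary select t"
  let ?M' = "ea_run n \<mu> lam (fcap f c) init vary select t"
  let ?B = "best_is f c :: (bits list \<times> 's) set"
  let ?C = "cond_pmf ?M ?B"
  let ?get = "\<lambda>st :: bits list \<times> 's. fst st ! (k - 1)"
  define D where "D = map_pmf ?get ?C"
  have mu: "0 < \<mu>" and k1: "k - 1 < \<mu>" using k by auto
  have ne: "set_pmf ?M \<inter> ?B \<noteq> {}"
  proof
    assume "set_pmf ?M \<inter> ?B = {}"
    then have "measure_pmf.prob ?M ?B = 0" using measure_Int_set_pmf[of ?M ?B] by (simp add: Int_commute)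
    then show False using pos by simp
  qed
  have setC: "set_pmf ?C = set_pmf ?M \<inter> ?B" using set_cond_pmf[OF ne] .
  have pC: "pmf ?C x = (if x \<in> ?B then pmf ?M x / measure_pmf.prob ?M ?B else 0)" for x
    using pmf_cond[OF ne] .
  have GB_Lc: "Lc f c x" if x: "x \<in> Good \<mu> n" "x \<in> ?B" for x
  proof -
    have "fst x \<noteq> []" using x mu unfolding Good_def by auto
    then have m: "\<forall>e\<in>set (fst x). f e \<le> Max (f ` set (fst x))" by simp
    have "Max (f ` set (fst x)) = c" using x(2) unfolding best_is_def by simp
    then show ?thesis using m unfolding Lc_def by simp
  qed
  have suppD: "set_pmf D \<subseteq> cube n"
  proof
    fix w assume "w \<in> set_pmf D"
    then obtain st where stC: "st \<in> set_pmf ?C" and w: "w = fst st ! (k - 1)"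
      unfolding D_def by auto
    have st: "st \<in> set_pmf ?M" using stC setC by blast
    have "st \<in> Good \<mu> n" using st run_support[OF alg] by blast
    then show "w \<in> cube n" unfolding w Good_def using k1 by auto
  qed
  have inv: "\<forall>a\<in>I. map_pmf (flip a) D = D"
  proof
    fix a assume aI: "a \<in> I"
    have a: "a < n" using aI I by auto
    define e where "e = (replicate n False)[a := True]"
    have eZ: "e \<in> Zset n I" unfolding e_def Zset_def cube_def using aI a by (auto simp: nth_list_update)
    have hf: "\<forall>y\<in>cube n. f y \<le> c \<longrightarrow> f (flip a y) = f y"
    proof (intro ballI impI)
      fix y assume y: "y \<in> cube n" and fy: "f y \<le> c"
      have "f (xorv y e) = f y" using hz y fy eZ by blast
      then show "f (flip a y) = f y" using xorv_e[OF y a] unfolding e_def by simp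
    qed
    have hg: "\<forall>y\<in>cube n. fcap f c (flip a y) = fcap f c y" using fcap_flip[OF hf] by blast
    have Minv: "map_pmf (phi a) ?M' = ?M'" by (rule run_inv[OF alg a hg])
    have req: "\<forall>y. Lc f c y \<longrightarrow> pmf ?M y = pmf ?M' y" by (rule run_eq[OF alg mu])
    have GB: "phi a x \<in> Good \<mu> n \<and> phi a x \<in> ?B \<and> pmf ?M (phi a x) = pmf ?M x"
      if x: "x \<in> Good \<mu> n" "x \<in> ?B" for x
    proof -
      have P: "length (fst x) = \<mu>" "set (fst x) \<subseteq> cube n" using x unfolding Good_def by auto
      have Lx: "Lc f c x" using GB_Lc[OF x] .
      have fim: "f ` set (fst (phi a x)) = f ` set (fst x)"
      proof -
        have "\<forall>e\<in>set (fst x). f (flip a e) = f e" using P(2) Lx hf unfolding Lc_def by blast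
        then show ?thesis unfolding phi_def by (force simp: image_iff)
      qed
      have G': "phi a x \<in> Good \<mu> n" using P unfolding Good_def phi_def by auto
      have B': "phi a x \<in> ?B" using x fim unfolding best_is_def by simp
      have L': "Lc f c (phi a x)" using Lx fim unfolding Lc_def by force
      have "pmf ?M (phi a x) = pmf ?M' (phi a x)" using req L' by blast
      also have "\<dots> = pmf (map_pmf (phi a) ?M') (phi a x)" using Minv by simp
      also have "\<dots> = pmf ?M' x" by (rule pmf_map_inj'[OF inj_phi])
      also have "\<dots> = pmf ?M x" using req Lx by metis
      finally show ?thesis using G' B' by simp
    qed
    have zero: "pmf ?C x = 0" if "\<not> (x \<in> Good \<mu> n \<and> x \<in> ?B)" for x
    proof (cases "x \<in> ?B")
      case True
      then have "x \<notin> Good \<mu> n" using that by blast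
      then have "x \<notin> set_pmf ?M" using run_support[OF alg] by blast
      then have "pmf ?M x = 0" unfolding pmf_eq_0_set_pmf .
      then show ?thesis using pC by simp
    next
      case False then show ?thesis using pC by simp
    qed
    have Cinv: "map_pmf (phi a) ?C = ?C"
    proof (rule pmf_eqI)
      fix x
      have "pmf (map_pmf (phi a) ?C) x = pmf (map_pmf (phi a) ?C) (phi a (phi a x))" by simp
      also have "\<dots> = pmf ?C (phi a x)" by (rule pmf_map_inj'[OF inj_phi])
      also have "\<dots> = pmf ?C x"
      proof (cases "x \<in> Good \<mu> n \<and> x \<in> ?B")
        case True
        then show ?thesis using GB[of x] pC by simp
      next
        case False
        have "\<not> (phi a x \<in> Good \<mu> n \<and> phi a x \<in> ?B)"
        proof
          assume "phi a x \<in> Good \<mu> n \<and> phi a x \<in> ?B"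
          then have "phi a (phi a x) \<in> Good \<mu> n \<and> phi a (phi a x) \<in> ?B" using GB[of "phi a x"] by blast
          then show False using False by simp
        qed
        then show ?thesis using zero False by simp
      qed
      finally show "pmf (map_pmf (phi a) ?C) x = pmf ?C x" .
    qed
    have "map_pmf (flip a) D = map_pmf (\<lambda>st. flip a (?get st)) ?C"
      unfolding D_def pmf.map_comp by (simp add: o_def)
    also have "\<dots> = map_pmf (\<lambda>st. ?get (phi a st)) ?C"
    proof (rule map_pmf_cong[OF refl])
      fix st assume "st \<in> set_pmf ?C"
      then have "st \<in> Good \<mu> n" using setC run_support[OF alg] by blast
      then have "k - 1 < length (fst st)" using k1 unfolding Good_def by simp
      then show "flip a (?get st) = ?get (phi a st)" unfolding phi_def by simp
    qed
    also have "\<dots> = map_pmf ?get (map_pmf (phi a) ?C)"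
      by (simp add: pmf.map_comp o_def)
    also have "\<dots> = D" unfolding Cinv D_def ..
    finally show "map_pmf (flip a) D = D" .
  qed
  have "prob_space.indep_vars (measure_pmf D) (\<lambda>_. count_space UNIV) (bit_family n I) (Some ` I \<union> {None})
     \<and> (\<forall>i\<in>I. \<forall>b. measure_pmf.prob D {x. x ! i = b} = 1 / 2)"
    by (rule pure_main[OF suppD I inv])
  then show ?thesis unfolding D_def Let_def .
qed

end
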